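(* A nontrivial monoid $M$ in $\mathcal{C}$ is an HFM if and only if $\mathcal{A}(M)$ is contained in an affine hyperplane $H$ of $V=\mathbb{R}\otimes_\mathbb{Z}\mathrm{gp}(M)$ not containing the origin; moreover, in that case $\mathcal{A}(M)=M\cap H$.
   Context: Convention: all monoids are commutative, cancellative, and reduced, written additively; $M^\bullet=M\setminus\{0\}$; atoms $\mathcal{A}(M)=M^\bullet\setminus(M^\bullet+M^\bullet)$. $\mathcal{C}$ is the class of monoids isomorphic to a submonoid of a free commutative monoid of finite rank (equivalently, of $(\mathbb{N}^d,+)$). $M$ is regarded as a submonoid of $V$ via $M\hookrightarrow\mathrm{gp}(M)\hookrightarrow V$. A factorization of $x$ is a multiset of atoms summing to $x$, its length the number of atoms with multiplicity; $M$ is an HFM (half-factorial) if every element is a sum of atoms and any two factorizations of the same nonzero element have the same length. *)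

theory Defs
  imports "HOL-Analysis.Analysis" "HOL-Library.Multiset"
begin

text \<open>Monoids of class C are modelled concretely as submonoids of (N^d,+),
  viewed inside R^d (vectors with natural-number coordinates).\<close>

definition nat_vec :: "real^'n \<Rightarrow> bool" where
  "nat_vec x \<longleftrightarrow> (\<forall>i. x $ i \<in> \<nat>)"

definition submonoid_Nd :: "(real^'n) set \<Rightarrow> bool" where
  "submonoid_Nd M \<longleftrightarrow> (\<forall>x\<in>M. nat_vec x) \<and> 0 \<in> M \<and> (\<forall>x\<in>M. \<forall>y\<in>M. x + y \<in> M)"

definition atoms :: "(real^'n) set \<Rightarrow> (real^'n) set" where
  "atoms M = {a \<in> M - {0}. \<not> (\<exists>b\<in>M - {0}. \<exists>c\<in>M - {0}. a = b + c)}"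

definition factorization :: "(real^'n) set \<Rightarrow> real^'n \<Rightarrow> (real^'n) multiset \<Rightarrow> bool" where
  "factorization M x F \<longleftrightarrow> set_mset F \<subseteq> atoms M \<and> sum_mset F = x"

definition is_HFM :: "(real^'n) set \<Rightarrow> bool" where
  "is_HFM M \<longleftrightarrow> (\<forall>x\<in>M. \<exists>F. factorization M x F) \<and>
     (\<forall>x\<in>M - {0}. \<forall>F G. factorization M x F \<and> factorization M x G \<longrightarrow> size F = size G)"

definition affine_hyperplane_in :: "(real^'n) set \<Rightarrow> (real^'n) set \<Rightarrow> bool" where
  "affine_hyperplane_in V H \<longleftrightarrow>
     (\<exists>f c. linear f \<and> (\<exists>v\<in>V. f v \<noteq> (0::real)) \<and> H = {v \<in> V. f v = c})"

end

theory Submission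
  imports Defs
begin

definition rat_vec :: "real^'n \<Rightarrow> bool" where
  "rat_vec x \<longleftrightarrow> (\<forall>i. x $ i \<in> \<rat>)"

inductive_set qspan :: "(real^'n) set \<Rightarrow> (real^'n) set" for S where
  qzero: "0 \<in> qspan S"
| qstep: "x \<in> qspan S \<Longrightarrow> s \<in> S \<Longrightarrow> q \<in> \<rat> \<Longrightarrow> x + q *\<^sub>R s \<in> qspan S"

lemma qspan_rat: assumes "\<forall>s\<in>S. rat_vec s" "x \<in> qspan S" shows "rat_vec x"
  using assms(2) by (induction x rule: qspan.induct) (use assms in \<open>auto simp: rat_vec_def\<close>)

lemma qspan_mono: assumes "S \<subseteq> T" "x \<in> qspan S" shows "x \<in> qspan T"
  using assms(2) by (induction x rule: qspan.induct) (use assms in \<open>auto intro: qspan.intros\<close>)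

lemma qspan_image:
  assumes "linear f" "z \<in> qspan (f ` S)"
  shows "\<exists>y\<in>qspan S. f y = z"
  using assms(2)
proof (induction z rule: qspan.induct)
  case qzero
  then show ?case using linear_0[OF assms(1)] by (auto intro: qspan.intros)
next
  case (qstep x s q)
  then obtain y t where "y \<in> qspan S" "f y = x" "t \<in> S" "s = f t" by auto
  then show ?case using linear_add[OF assms(1)] linear_scale[OF assms(1)] qstep
    by (auto intro!: bexI[of _ "y + q *\<^sub>R t"] qspan.intros)
qed

lemma rat_span:
  fixes S :: "(real^'n) set"
  shows "finite S \<Longrightarrow> card S \<le> n \<Longrightarrow> (\<forall>s\<in>S. rat_vec s) \<Longrightarrow> rat_vec x \<Longrightarrow> x \<in> span S \<Longrightarrow> x \<in> qspan S"
proof (induction n arbitrary: S x)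
  case 0
  then show ?case by (auto intro: qspan.intros)
next
  case (Suc n)
  show ?case
  proof (cases "S = {}")
    case True
    then show ?thesis using Suc by (auto intro: qspan.intros)
  next
    case False
    then obtain a where aS: "a \<in> S" by auto
    define S' where "S' = S - {a}"
    have S: "S = insert a S'" using aS S'_def by auto
    have fS': "finite S'" "card S' \<le> n" using Suc.prems aS S'_def by auto
    show ?thesis
    proof (cases "a = 0")
      case True
      have "x \<in> span S'" using Suc.prems S True by simp
      then have "x \<in> qspan S'" using Suc.IH[OF fS'] Suc.prems S by auto
      then show ?thesis using qspan_mono[of S' S] S by auto
    next
      case False
      then obtain j where j: "a $ j \<noteq> 0" by (metis vec_eq_iff zero_index)
      define P where "P v = v - (v $ j / a $ j) *\<^sub>R a" for v :: "real^'n"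
      have linP: "linear P" unfolding P_def
        by (intro linear_compose_sub linearI) (auto simp: algebra_simps add_divide_distrib scaleR_add_left)
      have Pa: "P a = 0" using j by (simp add: P_def)
      have ratP: "rat_vec v \<Longrightarrow> rat_vec (P v)" for v
        using Suc.prems(3) aS by (auto simp: rat_vec_def P_def)
      have "P x \<in> P ` span S" using Suc.prems by auto
      also have "\<dots> = span (P ` S)" using span_linear_image[OF linP] by simp
      also have "P ` S = insert 0 (P ` S')" using S Pa by simp
      finally have Px: "P x \<in> span (P ` S')" by simp
      have "card (P ` S') \<le> n" using fS' card_image_le order_trans by blast
      then have "P x \<in> qspan (P ` S')"
        using Suc.IH[of "P ` S'" "P x"] Px fS' ratP Suc.prems S by auto
      then obtain y where y: "y \<in> qspan S'" "P y = P x" using qspan_image[OF linP] by blast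
      have ry: "rat_vec y" using qspan_rat[of S' y] y Suc.prems S by auto
      define q where "q = (x $ j - y $ j) / a $ j"
      have qQ: "q \<in> \<rat>" using ry Suc.prems(4) aS Suc.prems(3)
        by (auto simp: q_def rat_vec_def)
      have "x = y + q *\<^sub>R a"
        using y(2) unfolding P_def q_def by (simp add: algebra_simps diff_divide_distrib)
      moreover have "y \<in> qspan S" using qspan_mono[of S' S] y S by auto
      ultimately show ?thesis using qspan.qstep[of y S a q] aS qQ by simp
    qed
  qed
qed

inductive_set mon :: "(real^'n) set \<Rightarrow> (real^'n) set" for B where
  mzero: "0 \<in> mon B"
| mgen: "b \<in> B \<Longrightarrow> b \<in> mon B"
| madd: "x \<in> mon B \<Longrightarrow> y \<in> mon B \<Longrightarrow> x + y \<in> mon B"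

lemma mon_nat: "z \<in> mon B \<Longrightarrow> real k *\<^sub>R z \<in> mon B"
proof (induction k)
  case 0 then show ?case by (simp add: mon.mzero)
next
  case (Suc k) then show ?case by (simp add: algebra_simps mon.madd)
qed

lemma qspan_clear:
  assumes "y \<in> qspan B"
  shows "\<exists>N::nat. N > 0 \<and> (\<exists>u\<in>mon B. \<exists>w\<in>mon B. real N *\<^sub>R y + w = u)"
  using assms
proof (induction y rule: qspan.induct)
  case qzero
  then show ?case by (auto intro!: exI[of _ "1::nat"] bexI[of _ 0] mon.mzero)
next
  case (qstep x s q)
  then obtain N u w where N: "N > 0" "u \<in> mon B" "w \<in> mon B" "real N *\<^sub>R x + w = u" by blast
  obtain a b where ab: "b > 0" "q = of_int a / of_int b" using Rats_cases'[OF qstep(3)] by blast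
  have sB: "s \<in> mon B" using qstep(2) by (rule mon.mgen)
  have key: "real (N * nat b) *\<^sub>R (x + q *\<^sub>R s) + real (nat b) *\<^sub>R w
        = real (nat b) *\<^sub>R u + (real N * of_int a) *\<^sub>R s"
  proof -
    have "real (N * nat b) *\<^sub>R (x + q *\<^sub>R s) = real (nat b) *\<^sub>R (real N *\<^sub>R x) + (real N * of_int a) *\<^sub>R s"
      using ab by (simp add: algebra_simps)
    then show ?thesis using N(4)[symmetric] by (simp add: algebra_simps)
  qed
  show ?case
  proof (cases "a \<ge> 0")
    case True
    have "(real N * of_int a) = real (N * nat a)" using True by simp
    then have "real (N * nat b) *\<^sub>R (x + q *\<^sub>R s) + real (nat b) *\<^sub>R w
        = real (nat b) *\<^sub>R u + real (N * nat a) *\<^sub>R s" using key by simp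
    moreover have "real (nat b) *\<^sub>R u + real (N * nat a) *\<^sub>R s \<in> mon B" "real (nat b) *\<^sub>R w \<in> mon B"
      by (intro mon.madd mon_nat N(2) N(3) sB)+
    moreover have "N * nat b > 0" using N ab by simp
    ultimately show ?thesis by blast
  next
    case False
    have "(real N * of_int a) = - real (N * nat (-a))" using False by simp
    then have "real (N * nat b) *\<^sub>R (x + q *\<^sub>R s) + (real (nat b) *\<^sub>R w + real (N * nat (-a)) *\<^sub>R s)
        = real (nat b) *\<^sub>R u" using key by (simp add: algebra_simps)
    moreover have "real (nat b) *\<^sub>R u \<in> mon B" "real (nat b) *\<^sub>R w + real (N * nat (-a)) *\<^sub>R s \<in> mon B"
      by (intro mon.madd mon_nat N(2) N(3) sB)+
    moreover have "N * nat b > 0" using N ab by simp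
    ultimately show ?thesis by blast
  qed
qed

lemma nat_vec_nonneg: "nat_vec x \<Longrightarrow> x $ i \<ge> 0"
  unfolding nat_vec_def by (metis Nats_cases of_nat_0_le_iff)

lemma nat_vec_rat: "nat_vec x \<Longrightarrow> rat_vec x"
  unfolding nat_vec_def rat_vec_def using Nats_subset_Rats by blast

lemma nat_vec_nz: "nat_vec x \<Longrightarrow> x \<noteq> 0 \<Longrightarrow> \<exists>i. x $ i \<ge> 1"
proof -
  assume a: "nat_vec x" "x \<noteq> 0"
  then obtain i where "x $ i \<noteq> 0" by (metis vec_eq_iff zero_index)
  moreover have "x $ i \<in> \<nat>" using a unfolding nat_vec_def by auto
  ultimately show ?thesis by (metis Nats_cases of_nat_0 of_nat_1 of_nat_le_iff less_one not_le)
qed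

lemma sum_mset_in:
  assumes "submonoid_Nd M" shows "set_mset F \<subseteq> M \<Longrightarrow> sum_mset F \<in> M"
  using assms by (induction F) (auto simp: submonoid_Nd_def)

lemma linear_sum_mset: "linear (f::'a::real_vector \<Rightarrow> 'b::real_vector) \<Longrightarrow> f (sum_mset F) = sum_mset (image_mset f F)"
  by (induction F) (auto simp: linear_0 linear_add)

lemma sum_mset_const: "(\<forall>a\<in>#F. f a = (c::real)) \<Longrightarrow> sum_mset (image_mset f F) = c * size F"
  by (induction F) (auto simp: algebra_simps)

lemma fact_zero:
  assumes M: "submonoid_Nd M" and F: "factorization M 0 F"
  shows "F = {#}"
proof (rule ccontr)
  assume "F \<noteq> {#}"
  then obtain a F' where F': "F = add_mset a F'" by (metis multiset_cases)
  have aA: "a \<in> atoms M" using F F' by (auto simp: factorization_def)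
  then have aM: "a \<in> M" "a \<noteq> 0" by (auto simp: atoms_def)
  have "sum_mset F' \<in> M" using F F' by (intro sum_mset_in[OF M]) (auto simp: factorization_def atoms_def)
  moreover have "a + sum_mset F' = 0" using F F' by (simp add: factorization_def)
  ultimately have "a $ i \<le> 0" for i using M nat_vec_nonneg unfolding submonoid_Nd_def
    by (metis add.right_neutral add_left_mono vector_add_component zero_index)
  moreover have "a $ i \<ge> 0" for i using M aM nat_vec_nonneg unfolding submonoid_Nd_def by blast
  ultimately have "a = 0" by (metis vec_eq_iff zero_index order_antisym)
  then show False using aM by simp
qed

definition wt :: "real^'n \<Rightarrow> real" where "wt x = (\<Sum>i\<in>UNIV. x $ i)"

lemma atomic:
  assumes M: "submonoid_Nd M"
  shows "x \<in> M \<Longrightarrow> wt x \<le> real n \<Longrightarrow> \<exists>F. factorization M x F"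
proof (induction n arbitrary: x)
  case 0
  have nn: "x $ i \<ge> 0" for i using M 0 nat_vec_nonneg unfolding submonoid_Nd_def by blast
  have "x $ i = 0" for i
  proof -
    have "x $ i \<le> wt x" unfolding wt_def using nn
      by (intro member_le_sum) auto
    then show ?thesis using 0 nn[of i] by simp
  qed
  then have "x = 0" by (simp add: vec_eq_iff)
  then show ?case by (auto intro!: exI[of _ "{#}"] simp: factorization_def)
next
  case (Suc n)
  show ?case
  proof (cases "x = 0 \<or> x \<in> atoms M")
    case True
    then show ?thesis
      by (auto intro: exI[of _ "{#}"] exI[of _ "{#x#}"] simp: factorization_def)
  next
    case False
    then obtain b c where bc: "b \<in> M" "c \<in> M" "b \<noteq> 0" "c \<noteq> 0" "x = b + c"
      using Suc.prems unfolding atoms_def by auto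
    have ge1: "wt y \<ge> 1" if yy: "y \<in> M" "y \<noteq> 0" for y
    proof -
      have nv: "nat_vec y" using M yy unfolding submonoid_Nd_def by blast
      obtain i where i: "y $ i \<ge> 1" using nat_vec_nz[OF nv yy(2)] by blast
      have "y $ i \<le> wt y" unfolding wt_def using nat_vec_nonneg[OF nv]
        by (intro member_le_sum) auto
      then show ?thesis using i by simp
    qed
    have wx: "wt x = wt b + wt c" using bc(5) by (simp add: wt_def sum.distrib)
    have "wt b \<le> real n" "wt c \<le> real n" using wx ge1[of b] ge1[of c] bc Suc.prems by auto
    then obtain F G where "factorization M b F" "factorization M c G"
      using Suc.IH bc by blast
    then have "factorization M x (F + G)" using bc by (auto simp: factorization_def)
    then show ?thesis by blast
  qed
qed

lemma atomic': "submonoid_Nd M \<Longrightarrow> x \<in> M \<Longrightarrow> \<exists>F. factorization M x F"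
  using atomic[of M x "nat \<lceil>wt x\<rceil>"] by (meson real_nat_ceiling_ge)



lemma fact_f:
  fixes f :: "real^'n \<Rightarrow> real"
  assumes "linear f" "\<forall>a\<in>atoms M. f a = c" "factorization M x F"
  shows "f x = c * size F"
proof -
  have "x = sum_mset F" using assms(3) by (simp add: factorization_def)
  then have "f x = sum_mset (image_mset f F)" using linear_sum_mset[OF assms(1)] by simp
  also have "\<dots> = c * size F" using assms(2,3) by (intro sum_mset_const) (auto simp: factorization_def)
  finally show ?thesis .
qed

lemma backward:
  fixes M :: "(real^'n) set"
  assumes M: "submonoid_Nd M" and H: "affine_hyperplane_in (span M) H" "0 \<notin> H" "atoms M \<subseteq> H"
  shows "is_HFM M \<and> atoms M = M \<inter> H"
proof -
  obtain f :: "real^'n \<Rightarrow> real" and c where f: "linear f" "H = {v \<in> span M. f v = c}"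
    using H(1) unfolding affine_hyperplane_in_def by blast
  have c: "c \<noteq> 0" using H(2) f linear_0[OF f(1)] span_0[of M] by auto
  have fa: "\<forall>a\<in>atoms M. f a = c" using H(3) f by auto
  have "is_HFM M" unfolding is_HFM_def
  proof (intro conjI ballI allI impI)
    fix x assume "x \<in> M" then show "\<exists>F. factorization M x F" using atomic'[OF M] by blast
  next
    fix x F G assume "factorization M x F \<and> factorization M x G"
    then have "c * size F = c * size G" using fact_f[OF f(1) fa] by metis
    then show "size F = size G" using c by simp
  qed
  moreover have "atoms M = M \<inter> H"
  proof
    show "atoms M \<subseteq> M \<inter> H" using H(3) by (auto simp: atoms_def)
  next
    show "M \<inter> H \<subseteq> atoms M"
    proof
      fix x assume x: "x \<in> M \<inter> H"
      then obtain F where F: "factorization M x F" using atomic'[OF M] by blast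
      have "c * size F = c" using fact_f[OF f(1) fa F] x f by auto
      then have "size F = 1" using c by simp
      then obtain a where "F = {#a#}" using size_1_singleton_mset by blast
      then show "x \<in> atoms M" using F by (auto simp: factorization_def)
    qed
  qed
  ultimately show ?thesis by blast
qed

lemma forward:
  fixes M :: "(real^'n) set"
  assumes M: "submonoid_Nd M" and M0: "M \<noteq> {0}" and hfm: "is_HFM M"
  shows "\<exists>H. affine_hyperplane_in (span M) H \<and> 0 \<notin> H \<and> atoms M \<subseteq> H"
proof -
  have uniq: "size F = size G" if "x \<in> M" "factorization M x F" "factorization M x G" for x F G
  proof (cases "x = 0")
    case True then show ?thesis using fact_zero[OF M, of F] fact_zero[OF M, of G] that by simp
  next
    case False
    have "\<forall>x\<in>M - {0}. \<forall>F G. factorization M x F \<and> factorization M x G \<longrightarrow> size F = size G"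
      using hfm unfolding is_HFM_def by (rule conjunct2)
    then show ?thesis using False that by blast
  qed
  define l where "l x = size (SOME F. factorization M x F)" for x
  have lF: "l x = size F" if "x \<in> M" "factorization M x F" for x F
  proof -
    have "factorization M x (SOME F. factorization M x F)" by (rule someI[of _ F]) (rule that(2))
    then show ?thesis unfolding l_def using uniq[OF that(1)] that(2) by blast
  qed
  have ladd: "l (x + y) = l x + l y" if xy: "x \<in> M" "y \<in> M" for x y
  proof -
    obtain F G where F: "factorization M x F" "factorization M y G" using atomic'[OF M] xy by blast
    then have "factorization M (x + y) (F + G)" by (auto simp: factorization_def)
    moreover have "x + y \<in> M" using M xy unfolding submonoid_Nd_def by blast
    ultimately show ?thesis using lF[of "x+y" "F+G"] lF[OF xy(1) F(1)] lF[OF xy(2) F(2)] by simp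
  qed
  have l0: "l 0 = 0" using lF[of 0 "{#}"] M by (auto simp: factorization_def submonoid_Nd_def)
  obtain B where B: "B \<subseteq> M" "independent B" "M \<subseteq> span B" by (rule maximal_independent_subset)
  have finB: "finite B" using independent_bound[OF B(2)] by (rule conjunct1)
  obtain f :: "real^'n \<Rightarrow> real" where f: "linear f" "\<forall>x\<in>B. f x = real (l x)"
    using linear_independent_extend[OF B(2), of "\<lambda>x. real (l x)"] by auto
  have monM: "z \<in> M \<and> f z = real (l z)" if "z \<in> mon B" for z
    using that
  proof (induction z rule: mon.induct)
    case mzero then show ?case using M l0 linear_0[OF f(1)] by (simp add: submonoid_Nd_def)
  next
    case (mgen b) then show ?case using B f by auto
  next
    case (madd x y) then show ?case using M ladd linear_add[OF f(1)] by (simp add: submonoid_Nd_def)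
  qed
  have fl: "f m = real (l m)" if m: "m \<in> M" for m
  proof -
    have ratB: "\<forall>s\<in>B. rat_vec s" using B M nat_vec_rat unfolding submonoid_Nd_def by blast
    have "rat_vec m" using M m nat_vec_rat unfolding submonoid_Nd_def by blast
    then have "m \<in> qspan B" using rat_span[OF finB order_refl ratB] m B by blast
    then obtain N u w where N: "N > 0" "u \<in> mon B" "w \<in> mon B" "real N *\<^sub>R m + w = u"
      using qspan_clear by blast
    have mM: "real N *\<^sub>R m \<in> M" for N :: nat
    proof (induction N)
      case 0 then show ?case using M by (simp add: submonoid_Nd_def)
    next
      case (Suc N) then show ?case using M m by (simp add: submonoid_Nd_def algebra_simps)
    qed
    have lN: "l (real N *\<^sub>R m) = N * l m" for N :: nat
    proof (induction N)
      case 0 then show ?case using l0 by simp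
    next
      case (Suc N) then show ?case using ladd[OF m mM[of N]] by (simp add: algebra_simps)
    qed
    have "real N * f m + f w = f u" using N(4)[symmetric] by (simp add: linear_add[OF f(1)] linear_scale[OF f(1)])
    moreover have "f u = real (l u)" "f w = real (l w)" "w \<in> M" using monM N by auto
    moreover have "l u = N * l m + l w"
    proof -
      have "l u = l (real N *\<^sub>R m + w)" using N(4) by simp
      also have "\<dots> = l (real N *\<^sub>R m) + l w" by (rule ladd[OF mM[of N] \<open>w \<in> M\<close>])
      finally show ?thesis using lN by simp
    qed
    ultimately have "real N * f m = real N * real (l m)" by simp
    then show ?thesis using N(1) by simp
  qed
  have "0 \<in> M" using M by (simp add: submonoid_Nd_def)
  then obtain m where m: "m \<in> M" "m \<noteq> 0" using M0 by blast
  obtain F where F: "factorization M m F" using atomic'[OF M m(1)] by blast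
  have "F \<noteq> {#}" using F m by (auto simp: factorization_def)
  then have "f m \<noteq> 0" using fl[OF m(1)] lF[OF m(1) F] by simp
  define H where "H = {v \<in> span M. f v = 1}"
  have "affine_hyperplane_in (span M) H" unfolding affine_hyperplane_in_def H_def
    using f(1) \<open>f m \<noteq> 0\<close> span_base[OF m(1)] by (intro exI[of _ f] exI[of _ 1] conjI bexI[of _ m]) auto
  moreover have "0 \<notin> H" using linear_0[OF f(1)] by (simp add: H_def)
  moreover have "atoms M \<subseteq> H"
  proof
    fix a assume a: "a \<in> atoms M"
    then have aM: "a \<in> M" by (simp add: atoms_def)
    have "factorization M a {#a#}" using a by (simp add: factorization_def)
    then have "l a = 1" using lF[OF aM] by simp
    then show "a \<in> H" using fl[OF aM] aM span_base by (simp add: H_def)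
  qed
  ultimately show ?thesis by blast
qed

theorem mainTheorem9:
  fixes M :: "(real^'n) set"
  assumes "submonoid_Nd M" and "M \<noteq> {0}"
  shows "(is_HFM M \<longleftrightarrow>
            (\<exists>H. affine_hyperplane_in (span M) H \<and> 0 \<notin> H \<and> atoms M \<subseteq> H)) \<and>
         (\<forall>H. affine_hyperplane_in (span M) H \<and> 0 \<notin> H \<and> atoms M \<subseteq> H
               \<longrightarrow> atoms M = M \<inter> H)"
  using forward[OF assms] backward[OF assms(1)] by blast

end
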